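(* Let $S$ be a random subset of a finite set $L$ and $T$ a random subset of a finite set $R$, and let $(l,r)\in L\times R$. Suppose that all events $\{l'\in S\}$ for $l'\ne l$ and all events $\{r'\in T\}$ for $r'\ne r$ are jointly independent of the event $\{(l,r)\in S\times T\}$. Let $s$ be an element of $S$ chosen uniformly at random and $t$ an element of $T$ chosen uniformly at random ($(s,t)$ is undefined if $S=\varnothing$ or $T=\varnothing$). Then $$\Pr[(l,r)=(s,t)]\ge\frac{\Pr[(l,r)\in S\times T]}{(\mathbb{E}[|S|]+1)(\mathbb{E}[|T|]+1)}.$$ *)

theory Defs
  imports "HOL-Probability.Probability"
begin

definition choose_pair :: "('a set \<times> 'b set) pmf \<Rightarrow> ('a \<times> 'b) option pmf" where
  "choose_pair D = bind_pmf D (\<lambda>(S, T).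
     if S = {} \<or> T = {} then return_pmf None
     else map_pmf Some (pair_pmf (pmf_of_set S) (pmf_of_set T)))"

end

theory Submission imports Defs begin

lemma amgm_aux:
  fixes x y :: real assumes "x > 0" "y > 0"
  shows "3 * (x*y) \<le> 1 + x*x*y + x*y*y"
proof -
  define t where "t = sqrt (x*y)"
  have s0: "t > 0" using assms by (simp add: t_def)
  have ss: "t * t = x*y" using assms by (simp add: t_def)
  have "(sqrt x - sqrt y)^2 \<ge> 0" by simp
  hence "x + y \<ge> 2 * t" using assms
    by (simp add: t_def power2_eq_square algebra_simps real_sqrt_mult)
  hence "x*y*(x+y) \<ge> x*y*(2*t)" using assms by (intro mult_left_mono) auto
  moreover have "1 + x*y*(2*t) - 3*(x*y) = (t-1)^2*(2*t+1)"
    by (simp add: ss[symmetric] power2_eq_square algebra_simps)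
  moreover have "(t-1)^2*(2*t+1) \<ge> 0" using s0 by simp
  ultimately show ?thesis by (simp add: algebra_simps)
qed

lemma tangent_ineq:
  fixes p1 p2 p3 p4 :: real assumes "p1 > 0" "p2 > 0" "p3 > 0" "p4 > 0"
  shows "(3 - p1/p3 - p2/p4) / (p3*p4) \<le> 1/(p1*p2)"
proof -
  define x where "x = p1/p3"
  define y where "y = p2/p4"
  have x0: "x > 0" "y > 0" using assms by (auto simp: x_def y_def)
  have "3 * (x*y) \<le> 1 + x*x*y + x*y*y" by (rule amgm_aux[OF x0])
  hence "3 - x - y \<le> 1/(x*y)" using x0 by (simp add: field_simps)
  hence "(3 - x - y) / (p3*p4) \<le> 1/(x*y) / (p3*p4)" using assms by (intro divide_right_mono) auto
  also have "1/(x*y)/(p3*p4) = 1/(p1*p2)" using assms by (simp add: x_def y_def field_simps)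
  finally show ?thesis by (simp add: x_def y_def)
qed

theorem mainTheorem10:
  fixes D :: "('a set \<times> 'b set) pmf" and L :: "'a set" and R :: "'b set"
    and l :: 'a and r :: 'b
  assumes "finite L" and "finite R"
    and "\<forall>(S, T) \<in> set_pmf D. S \<subseteq> L \<and> T \<subseteq> R"
    and "l \<in> L" and "r \<in> R"
    and "prob_space.indep_set (measure_pmf D)
           {(\<lambda>(S, T). (S - {l}, T - {r})) -` Y | Y. True}
           {{(S, T). l \<in> S \<and> r \<in> T}}"
  shows "measure_pmf.prob (choose_pair D) {Some (l, r)} \<ge>
           measure_pmf.prob D {(S, T). l \<in> S \<and> r \<in> T} /
           ((measure_pmf.expectation D (\<lambda>(S, T). real (card S)) + 1) *
            (measure_pmf.expectation D (\<lambda>(S, T). real (card T)) + 1))"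
proof -
  define U where "U = set_pmf D"
  define w where "w = pmf D"
  define Ev where "Ev = {(S::'a set, T::'b set). l \<in> S \<and> r \<in> T}"
  define g where "g = (\<lambda>(S::'a set, T::'b set). (S - {l}, T - {r}))"
  define \<psi> where "\<psi> = (\<lambda>(S'::'a set, T'::'b set). 1 / ((real (card S') + 1) * (real (card T') + 1)))"
  define p where "p = measure_pmf.prob D Ev"
  have Usub: "U \<subseteq> Pow L \<times> Pow R" using assms(3) by (auto simp: U_def)
  have finU: "finite U" using Usub assms(1,2) by (meson finite_Pow_iff finite_SigmaI finite_subset)
  have finST: "finite S" "finite T" if "(S, T) \<in> U" for S T
    using that Usub assms(1,2) finite_subset by blast+
  have w1: "(\<Sum>\<omega>\<in>U. w \<omega>) = 1" unfolding w_def U_def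
    using finU by (intro sum_pmf_eq_1) (auto simp: U_def)
  have w0: "w \<omega> \<ge> 0" for \<omega> by (simp add: w_def)
  have expect: "measure_pmf.expectation D f = (\<Sum>\<omega>\<in>U. w \<omega> * f \<omega>)" for f :: "_ \<Rightarrow> real"
    unfolding U_def w_def by (subst integral_measure_pmf[OF finU[unfolded U_def]]) auto
  have measU: "measure_pmf.prob D A = (\<Sum>\<omega>\<in>U \<inter> A. w \<omega>)" for A
  proof -
    have "measure_pmf.prob D A = measure_pmf.prob D (A \<inter> set_pmf D)" by (simp add: measure_Int_set_pmf)
    also have "\<dots> = sum (pmf D) (A \<inter> set_pmf D)"
      using finU by (intro measure_measure_pmf_finite) (auto simp: U_def)
    finally show ?thesis by (simp add: U_def w_def Int_commute)
  qed
  have F1: "measure_pmf.prob (choose_pair D) {Some (l, r)} =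
      (\<Sum>\<omega>\<in>U. w \<omega> * (indicator Ev \<omega> * \<psi> (g \<omega>)))"
  proof -
    have "measure_pmf.prob (choose_pair D) {Some (l, r)} = pmf (choose_pair D) (Some (l, r))"
      by (simp add: measure_pmf_single)
    also have "\<dots> = measure_pmf.expectation D (\<lambda>(S, T).
       pmf (if S = {} \<or> T = {} then return_pmf None
     else map_pmf Some (pair_pmf (pmf_of_set S) (pmf_of_set T))) (Some (l, r)))"
      unfolding choose_pair_def pmf_bind by (simp add: case_prod_unfold)
    also have "\<dots> = (\<Sum>\<omega>\<in>U. w \<omega> * (case \<omega> of (S, T) \<Rightarrow>
       pmf (if S = {} \<or> T = {} then return_pmf None
     else map_pmf Some (pair_pmf (pmf_of_set S) (pmf_of_set T))) (Some (l, r))))"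
      by (rule expect)
    also have "\<dots> = (\<Sum>\<omega>\<in>U. w \<omega> * (indicator Ev \<omega> * \<psi> (g \<omega>)))"
    proof (intro sum.cong refl arg_cong2[where f="(*)"])
      fix \<omega> assume "\<omega> \<in> U"
      then obtain S T where o: "\<omega> = (S, T)" and fin: "finite S" "finite T"
        using finST by (cases \<omega>) auto
      show "(case \<omega> of (S, T) \<Rightarrow>
       pmf (if S = {} \<or> T = {} then return_pmf None
     else map_pmf Some (pair_pmf (pmf_of_set S) (pmf_of_set T))) (Some (l, r))) =
         indicator Ev \<omega> * \<psi> (g \<omega>)"
      proof (cases "S = {} \<or> T = {}")
        case True thus ?thesis by (auto simp: o Ev_def)
      next
        case False
        hence ne: "S \<noteq> {}" "T \<noteq> {}" by auto
        have "pmf (map_pmf Some (pair_pmf (pmf_of_set S) (pmf_of_set T))) (Some (l, r))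
            = pmf (pair_pmf (pmf_of_set S) (pmf_of_set T)) (l, r)"
          by (rule pmf_map_inj') simp
        also have "\<dots> = indicator S l / card S * (indicator T r / card T)"
          using ne fin by (simp add: pmf_pair)
        also have "\<dots> = indicator Ev \<omega> * \<psi> (g \<omega>)"
        proof (cases "l \<in> S \<and> r \<in> T")
          case True
          hence "card S = card (S - {l}) + 1" "card T = card (T - {r}) + 1"
            using fin by (metis Suc_eq_plus1 card_Suc_Diff1)+
          thus ?thesis using True by (simp add: o Ev_def g_def \<psi>_def)
        next
          case False thus ?thesis by (auto simp: o Ev_def)
        qed
        finally show ?thesis using False by (simp add: o)
      qed
    qed
    finally show ?thesis .
  qed
  have indep: "(\<Sum>\<omega>\<in>{\<omega>\<in>U. g \<omega> = y}. w \<omega> * indicator Ev \<omega>) = p * (\<Sum>\<omega>\<in>{\<omega>\<in>U. g \<omega> = y}. w \<omega>)" for y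
  proof -
    have "measure_pmf.prob D (g -` {y} \<inter> Ev) = measure_pmf.prob D (g -` {y}) * measure_pmf.prob D Ev"
      using assms(6) unfolding g_def Ev_def
      by (intro prob_space.indep_setD[OF prob_space_measure_pmf]) auto
    moreover have "measure_pmf.prob D (g -` {y} \<inter> Ev) = (\<Sum>\<omega>\<in>{\<omega>\<in>U. g \<omega> = y}. w \<omega> * indicator Ev \<omega>)"
      unfolding measU using finU
      by (auto simp: indicator_def sum.If_cases intro!: sum.cong)
    moreover have "measure_pmf.prob D (g -` {y}) = (\<Sum>\<omega>\<in>{\<omega>\<in>U. g \<omega> = y}. w \<omega>)"
      unfolding measU by (auto intro!: sum.cong)
    ultimately show ?thesis by (simp add: p_def)
  qed
  have F3: "(\<Sum>\<omega>\<in>U. w \<omega> * (indicator Ev \<omega> * \<psi> (g \<omega>))) = p * (\<Sum>\<omega>\<in>U. w \<omega> * \<psi> (g \<omega>))"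
  proof -
    have "(\<Sum>\<omega>\<in>U. w \<omega> * (indicator Ev \<omega> * \<psi> (g \<omega>))) =
        (\<Sum>y\<in>g ` U. \<Sum>\<omega>\<in>{\<omega>\<in>U. g \<omega> = y}. w \<omega> * (indicator Ev \<omega> * \<psi> (g \<omega>)))"
      using finU by (intro sum.group[symmetric]) auto
    also have "\<dots> = (\<Sum>y\<in>g ` U. \<psi> y * (\<Sum>\<omega>\<in>{\<omega>\<in>U. g \<omega> = y}. w \<omega> * indicator Ev \<omega>))"
      by (intro sum.cong refl) (auto simp: sum_distrib_left intro!: sum.cong)
    also have "\<dots> = (\<Sum>y\<in>g ` U. p * (\<Sum>\<omega>\<in>{\<omega>\<in>U. g \<omega> = y}. w \<omega> * \<psi> (g \<omega>)))"
      by (intro sum.cong refl) (auto simp: indep sum_distrib_left intro!: sum.cong)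
    also have "\<dots> = p * (\<Sum>\<omega>\<in>U. w \<omega> * \<psi> (g \<omega>))"
      unfolding sum_distrib_left[symmetric] using finU by (subst sum.group) auto
    finally show ?thesis .
  qed
  define a where "a = (\<Sum>\<omega>\<in>U. w \<omega> * real (card (fst (g \<omega>))))"
  define b where "b = (\<Sum>\<omega>\<in>U. w \<omega> * real (card (snd (g \<omega>))))"
  have a0: "a \<ge> 0" "b \<ge> 0" unfolding a_def b_def using w0 by (auto intro!: sum_nonneg)
  have F4: "1 / ((a+1)*(b+1)) \<le> (\<Sum>\<omega>\<in>U. w \<omega> * \<psi> (g \<omega>))"
  proof -
    define u where "u = (\<lambda>\<omega>. real (card (fst (g \<omega>))) + 1)"
    define v where "v = (\<lambda>\<omega>. real (card (snd (g \<omega>))) + 1)"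
    have "(\<Sum>\<omega>\<in>U. w \<omega> * ((3 - u \<omega>/(a+1) - v \<omega>/(b+1)) / ((a+1)*(b+1))))
        = (3 * (\<Sum>\<omega>\<in>U. w \<omega>) - (\<Sum>\<omega>\<in>U. w \<omega> * u \<omega>)/(a+1) - (\<Sum>\<omega>\<in>U. w \<omega> * v \<omega>)/(b+1)) / ((a+1)*(b+1))"
      by (simp add: sum_divide_distrib[symmetric] sum_distrib_left sum_distrib_right sum_subtractf sum.distrib algebra_simps)
    also have "(\<Sum>\<omega>\<in>U. w \<omega> * u \<omega>) = a + 1"
      using w1 by (simp add: u_def a_def algebra_simps sum.distrib)
    also have "(\<Sum>\<omega>\<in>U. w \<omega> * v \<omega>) = b + 1"
      using w1 by (simp add: v_def b_def algebra_simps sum.distrib)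
    also have "(3 * (\<Sum>\<omega>\<in>U. w \<omega>) - (a + 1)/(a+1) - (b + 1)/(b+1)) / ((a+1)*(b+1)) = 1 / ((a+1)*(b+1))"
      using w1 a0 by simp
    finally have eq: "(\<Sum>\<omega>\<in>U. w \<omega> * ((3 - u \<omega>/(a+1) - v \<omega>/(b+1)) / ((a+1)*(b+1)))) = 1 / ((a+1)*(b+1))" .
    have "(\<Sum>\<omega>\<in>U. w \<omega> * ((3 - u \<omega>/(a+1) - v \<omega>/(b+1)) / ((a+1)*(b+1)))) \<le> (\<Sum>\<omega>\<in>U. w \<omega> * \<psi> (g \<omega>))"
    proof (intro sum_mono mult_left_mono w0)
      fix \<omega>
      have "\<psi> (g \<omega>) = 1 / (u \<omega> * v \<omega>)" by (simp add: \<psi>_def u_def v_def case_prod_unfold)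
      thus "(3 - u \<omega>/(a+1) - v \<omega>/(b+1)) / ((a+1)*(b+1)) \<le> \<psi> (g \<omega>)"
        using a0 by (simp only:) (rule tangent_ineq, auto simp: u_def v_def)
    qed
    thus ?thesis using eq by simp
  qed
  define ES where "ES = measure_pmf.expectation D (\<lambda>(S, T). real (card S))"
  define ET where "ET = measure_pmf.expectation D (\<lambda>(S, T). real (card T))"
  have aES: "a \<le> ES" unfolding ES_def expect a_def
    by (intro sum_mono mult_left_mono w0) (auto simp: g_def case_prod_unfold card_Diff1_le)
  have bET: "b \<le> ET" unfolding ET_def expect b_def
    by (intro sum_mono mult_left_mono w0) (auto simp: g_def case_prod_unfold card_Diff1_le)
  have p0: "p \<ge> 0" by (simp add: p_def)
  have "p / ((ES+1)*(ET+1)) \<le> p / ((a+1)*(b+1))"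
    using a0 aES bET p0 by (intro divide_left_mono mult_mono mult_pos_pos) auto
  also have "\<dots> = p * (1 / ((a+1)*(b+1)))" by simp
  also have "\<dots> \<le> p * (\<Sum>\<omega>\<in>U. w \<omega> * \<psi> (g \<omega>))" using F4 p0 by (rule mult_left_mono)
  also have "\<dots> = measure_pmf.prob (choose_pair D) {Some (l, r)}" using F1 F3 by simp
  finally show ?thesis by (simp add: p_def Ev_def ES_def ET_def)
qed

end
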